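(* Consider a Markov decision process with finite state set $S$, finite action set $A$, transition kernel $T(s'\mid s,a)$, initial state distribution $p_0$ and discount factor $\gamma\in[0,1)$. Let $\beta>0$, $\alpha\in[0,1)$, let $\mu^U(a\mid s)$ be a policy with $\mu^U(a\mid s)>0$ for all $(s,a)$, let $d^U$ be a probability distribution on $S\times A$, let $\Psi:S\times A\to\mathbb{R}$, and set $\delta(s,a)=\exp\big(\frac{\Psi(s,a)}{1-\alpha}\big)$. For $Q:S\times A\to\mathbb{R}$ and a policy $\pi$ define $$V_Q^\pi(s)=\mathbb{E}_{a\sim\pi(\cdot\mid s)}\Big[Q(s,a)-\beta\log\frac{\pi(a\mid s)}{\mu^U(a\mid s)}\Big],\qquad \mathcal{T}^\pi[Q](s,a)=Q(s,a)-\gamma\,\mathbb{E}_{s'\sim T(\cdot\mid s,a)}\big[V_Q^\pi(s')\big],$$ $$\widetilde{L}(Q,\pi)=(1-\gamma)\,\mathbb{E}_{s\sim p_0}\big[V_Q^\pi(s)\big]-\mathbb{E}_{(s,a)\sim d^U}\big[\delta(s,a)\,\mathcal{T}^\pi[Q](s,a)\big]+(1-\alpha)\,\mathbb{E}_{(s,a)\sim d^U}\big[\delta(s,a)\big].$$ Also define $V_Q(s)=\beta\log\big(\sum_{a}\mu^U(a\mid s)\exp(Q(s,a)/\beta)\big)$, $\mathcal{T}[Q](s,a)=Q(s,a)-\gamma\,\mathbb{E}_{s'\sim T(\cdot\mid s,a)}[V_Q(s')]$, and $$\widetilde{L}(Q)=(1-\gamma)\,\mathbb{E}_{s\sim p_0}\big[V_Q(s)\big]-\mathbb{E}_{(s,a)\sim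 d^U}\big[\delta(s,a)\,\mathcal{T}[Q](s,a)\big].$$ Then: (i) $\widetilde{L}(Q,\pi)$ is linear in $Q$ and concave in $\pi$, and consequently $\max_\pi\min_Q\widetilde{L}(Q,\pi)=\min_Q\max_\pi\widetilde{L}(Q,\pi)$. (ii) The min–max problem $\min_Q\max_\pi\widetilde{L}(Q,\pi)$ reduces to the non-adversarial problem $\min_Q\widetilde{L}(Q)$ (for every $Q$, $\max_\pi\widetilde{L}(Q,\pi)$ equals $\widetilde{L}(Q)$ plus the $Q$-independent constant $(1-\alpha)\mathbb{E}_{(s,a)\sim d^U}[\delta(s,a)]$), and $\widetilde{L}(Q)$ is convex in $Q$.
   Context: Policies $\pi$ range over all conditional distributions $\pi(\cdot\mid s)$ on $A$, $s\in S$. In the paper $\mu^U$ is the behavior policy of the union dataset, $d^U$ its state-action distribution, and $\Psi(s,a)=\log\frac{d^G(s,a)}{d^U(s,a)}-\alpha\log\frac{d^B(s,a)}{d^U(s,a)}$. *)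

theory Defs
  imports "HOL-Analysis.Analysis"
begin

definition is_policy :: "('s::finite \<Rightarrow> 'a::finite \<Rightarrow> real) \<Rightarrow> bool" where
  "is_policy \<pi> \<longleftrightarrow> (\<forall>s a. 0 \<le> \<pi> s a) \<and> (\<forall>s. (\<Sum>a\<in>UNIV. \<pi> s a) = 1)"

definition policies :: "('s::finite \<Rightarrow> 'a::finite \<Rightarrow> real) set" where
  "policies = {\<pi>. is_policy \<pi>}"

definition delta_w :: "real \<Rightarrow> ('s \<Rightarrow> 'a \<Rightarrow> real) \<Rightarrow> 's \<Rightarrow> 'a \<Rightarrow> real" where
  "delta_w \<alpha> \<Psi> s a = exp (\<Psi> s a / (1 - \<alpha>))"

definition V_pi :: "real \<Rightarrow> ('s \<Rightarrow> 'a::finite \<Rightarrow> real) \<Rightarrow> ('s \<Rightarrow> 'a \<Rightarrow> real)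
                     \<Rightarrow> ('s \<Rightarrow> 'a \<Rightarrow> real) \<Rightarrow> 's \<Rightarrow> real" where
  "V_pi \<beta> \<mu> Q \<pi> s = (\<Sum>a\<in>UNIV. \<pi> s a * (Q s a - \<beta> * ln (\<pi> s a / \<mu> s a)))"

definition Bell_pi :: "real \<Rightarrow> ('s::finite \<Rightarrow> 'a \<Rightarrow> 's \<Rightarrow> real) \<Rightarrow> real \<Rightarrow> ('s \<Rightarrow> 'a::finite \<Rightarrow> real)
                     \<Rightarrow> ('s \<Rightarrow> 'a \<Rightarrow> real) \<Rightarrow> ('s \<Rightarrow> 'a \<Rightarrow> real) \<Rightarrow> 's \<Rightarrow> 'a \<Rightarrow> real" where
  "Bell_pi \<gamma> T \<beta> \<mu> Q \<pi> s a = Q s a - \<gamma> * (\<Sum>s'\<in>UNIV. T s a s' * V_pi \<beta> \<mu> Q \<pi> s')"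

definition L_minmax ::
  "real \<Rightarrow> ('s::finite \<Rightarrow> 'a::finite \<Rightarrow> 's \<Rightarrow> real) \<Rightarrow> ('s \<Rightarrow> real) \<Rightarrow> real \<Rightarrow> real
   \<Rightarrow> ('s \<Rightarrow> 'a \<Rightarrow> real) \<Rightarrow> ('s \<Rightarrow> 'a \<Rightarrow> real) \<Rightarrow> ('s \<Rightarrow> 'a \<Rightarrow> real)
   \<Rightarrow> ('s \<Rightarrow> 'a \<Rightarrow> real) \<Rightarrow> ('s \<Rightarrow> 'a \<Rightarrow> real) \<Rightarrow> real" where
  "L_minmax \<gamma> T p0 \<beta> \<alpha> \<mu> dU \<Psi> Q \<pi> =
     (1 - \<gamma>) * (\<Sum>s\<in>UNIV. p0 s * V_pi \<beta> \<mu> Q \<pi> s)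
     - (\<Sum>s\<in>UNIV. \<Sum>a\<in>UNIV. dU s a * (delta_w \<alpha> \<Psi> s a * Bell_pi \<gamma> T \<beta> \<mu> Q \<pi> s a))
     + (1 - \<alpha>) * (\<Sum>s\<in>UNIV. \<Sum>a\<in>UNIV. dU s a * delta_w \<alpha> \<Psi> s a)"

definition V_soft :: "real \<Rightarrow> ('s \<Rightarrow> 'a::finite \<Rightarrow> real) \<Rightarrow> ('s \<Rightarrow> 'a \<Rightarrow> real) \<Rightarrow> 's \<Rightarrow> real" where
  "V_soft \<beta> \<mu> Q s = \<beta> * ln (\<Sum>a\<in>UNIV. \<mu> s a * exp (Q s a / \<beta>))"

definition Bell_soft :: "real \<Rightarrow> ('s::finite \<Rightarrow> 'a \<Rightarrow> 's \<Rightarrow> real) \<Rightarrow> real \<Rightarrow> ('s \<Rightarrow> 'a::finite \<Rightarrow> real)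
                     \<Rightarrow> ('s \<Rightarrow> 'a \<Rightarrow> real) \<Rightarrow> 's \<Rightarrow> 'a \<Rightarrow> real" where
  "Bell_soft \<gamma> T \<beta> \<mu> Q s a = Q s a - \<gamma> * (\<Sum>s'\<in>UNIV. T s a s' * V_soft \<beta> \<mu> Q s')"

definition L_single ::
  "real \<Rightarrow> ('s::finite \<Rightarrow> 'a::finite \<Rightarrow> 's \<Rightarrow> real) \<Rightarrow> ('s \<Rightarrow> real) \<Rightarrow> real \<Rightarrow> real
   \<Rightarrow> ('s \<Rightarrow> 'a \<Rightarrow> real) \<Rightarrow> ('s \<Rightarrow> 'a \<Rightarrow> real) \<Rightarrow> ('s \<Rightarrow> 'a \<Rightarrow> real)
   \<Rightarrow> ('s \<Rightarrow> 'a \<Rightarrow> real) \<Rightarrow> real" where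
  "L_single \<gamma> T p0 \<beta> \<alpha> \<mu> dU \<Psi> Q =
     (1 - \<gamma>) * (\<Sum>s\<in>UNIV. p0 s * V_soft \<beta> \<mu> Q s)
     - (\<Sum>s\<in>UNIV. \<Sum>a\<in>UNIV. dU s a * (delta_w \<alpha> \<Psi> s a * Bell_soft \<gamma> T \<beta> \<mu> Q s a))"

end

theory Submission
  imports Defs
begin

definition wt :: "real \<Rightarrow> ('s::finite \<Rightarrow> 'a::finite \<Rightarrow> 's \<Rightarrow> real) \<Rightarrow> ('s \<Rightarrow> real) \<Rightarrow> real
   \<Rightarrow> ('s \<Rightarrow> 'a \<Rightarrow> real) \<Rightarrow> ('s \<Rightarrow> 'a \<Rightarrow> real) \<Rightarrow> 's \<Rightarrow> real" where
  "wt \<gamma> T p0 \<alpha> dU \<Psi> s' = (1 - \<gamma>) * p0 s' + \<gamma> * (\<Sum>s\<in>UNIV. \<Sum>a\<in>UNIV. dU s a * delta_w \<alpha> \<Psi> s a * T s a s')"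

lemma decomp_gen:
  fixes T :: "'s::finite \<Rightarrow> 'a::finite \<Rightarrow> 's \<Rightarrow> real" and V :: "'s \<Rightarrow> real"
  shows "(1 - \<gamma>) * (\<Sum>s\<in>UNIV. p0 s * V s)
     - (\<Sum>s\<in>UNIV. \<Sum>a\<in>UNIV. dU s a * (delta_w \<alpha> \<Psi> s a * (Q s a - \<gamma> * (\<Sum>s'\<in>UNIV. T s a s' * V s'))))
   = (\<Sum>s'\<in>UNIV. wt \<gamma> T p0 \<alpha> dU \<Psi> s' * V s') - (\<Sum>s\<in>UNIV. \<Sum>a\<in>UNIV. dU s a * delta_w \<alpha> \<Psi> s a * Q s a)"
proof -
  have e1: "(\<Sum>s'\<in>UNIV. wt \<gamma> T p0 \<alpha> dU \<Psi> s' * V s') = (1 - \<gamma>) * (\<Sum>s\<in>UNIV. p0 s * V s)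
     + \<gamma> * (\<Sum>s'\<in>UNIV. \<Sum>s\<in>UNIV. \<Sum>a\<in>UNIV. dU s a * delta_w \<alpha> \<Psi> s a * T s a s' * V s')"
  proof -
    have "\<And>s'. wt \<gamma> T p0 \<alpha> dU \<Psi> s' * V s' = (1 - \<gamma>) * (p0 s' * V s')
       + \<gamma> * (\<Sum>s\<in>UNIV. \<Sum>a\<in>UNIV. dU s a * delta_w \<alpha> \<Psi> s a * T s a s' * V s')"
      by (simp add: wt_def algebra_simps sum_distrib_left sum_distrib_right)
    then show ?thesis by (simp add: sum.distrib sum_distrib_left)
  qed
  have e2: "(\<Sum>s'\<in>UNIV. \<Sum>s\<in>UNIV. \<Sum>a\<in>UNIV. dU s a * delta_w \<alpha> \<Psi> s a * T s a s' * V s')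
      = (\<Sum>s\<in>UNIV. \<Sum>a\<in>UNIV. \<Sum>s'\<in>UNIV. dU s a * delta_w \<alpha> \<Psi> s a * T s a s' * V s')"
    by (subst sum.swap, rule sum.cong, simp, rule sum.swap)
  show ?thesis unfolding e1 e2
    by (simp add: algebra_simps sum.distrib sum_distrib_left sum_distrib_right sum_subtractf)
qed

lemma ent_key:
  fixes x y m :: real
  assumes "0 \<le> x" "0 < y" "0 < m"
  shows "x * ln (y / m) + x - y \<le> x * ln (x / m)"
proof (cases "x = 0")
  case True then show ?thesis using assms by simp
next
  case False
  hence xp: "0 < x" using assms by simp
  have "ln (y / x) \<le> y / x - 1" using xp assms by (intro ln_le_minus_one) simp
  moreover have "ln (y / m) = ln (y / x) + ln (x / m)" using xp assms
    by (simp add: ln_div)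
  ultimately have "ln (y / m) \<le> y / x - 1 + ln (x / m)" by simp
  hence "x * ln (y / m) \<le> x * (y / x - 1 + ln (x / m))" using xp by (simp add: mult_left_mono)
  thus ?thesis using xp by (simp add: algebra_simps)
qed

lemma ent_conc:
  fixes t x1 x2 m :: real
  assumes "0 \<le> t" "t \<le> 1" "0 \<le> x1" "0 \<le> x2" "0 < m"
  shows "(t * x1 + (1 - t) * x2) * ln ((t * x1 + (1 - t) * x2) / m)
       \<le> t * (x1 * ln (x1 / m)) + (1 - t) * (x2 * ln (x2 / m))"
proof -
  define y where "y = t * x1 + (1 - t) * x2"
  have y0: "0 \<le> y" using assms by (simp add: y_def)
  show ?thesis
  proof (cases "y = 0")
    case True
    hence "t * x1 = 0" "(1 - t) * x2 = 0" using assms unfolding y_def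
      by (smt (verit) mult_nonneg_nonneg)+
    then have "t * (x1 * ln (x1 / m)) = 0" "(1 - t) * (x2 * ln (x2 / m)) = 0"
      by (metis mult.assoc mult_zero_left)+
    then show ?thesis using True unfolding y_def by (simp only: add_0 ln_0 div_0 mult_zero_left order_refl)
  next
    case False
    hence yp: "0 < y" using y0 by simp
    have a: "t * (x1 * ln (y / m) + x1 - y) \<le> t * (x1 * ln (x1 / m))"
      using ent_key[OF assms(3) yp assms(5)] assms by (intro mult_left_mono) auto
    have b: "(1 - t) * (x2 * ln (y / m) + x2 - y) \<le> (1 - t) * (x2 * ln (x2 / m))"
      using ent_key[OF assms(4) yp assms(5)] assms by (intro mult_left_mono) auto
    have "y * ln (y / m) = t * (x1 * ln (y / m) + x1 - y) + (1 - t) * (x2 * ln (y / m) + x2 - y)"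
      unfolding y_def by (simp add: algebra_simps)
    then show ?thesis using a b unfolding y_def by linarith
  qed
qed

lemma sum_mix:
  fixes w f g :: "'b \<Rightarrow> real" and t :: real
  shows   "(\<Sum>s\<in>A. w s * (t * f s + (1 - t) * g s)) = t * (\<Sum>s\<in>A. w s * f s) + (1 - t) * (\<Sum>s\<in>A. w s * g s)"
proof -
  have "(\<Sum>s\<in>A. w s * (t * f s + (1 - t) * g s)) = (\<Sum>s\<in>A. t * (w s * f s) + (1 - t) * (w s * g s))"
    by (intro sum.cong refl) (simp add: algebra_simps)
  also have "\<dots> = t * (\<Sum>s\<in>A. w s * f s) + (1 - t) * (\<Sum>s\<in>A. w s * g s)"
    by (simp only: sum.distrib sum_distrib_left)
  finally show ?thesis .
qed

lemma V_pi_lin: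
  "V_pi \<beta> \<mu> (\<lambda>s a. t * Q1 s a + (1 - t) * Q2 s a) \<pi> s
   = t * V_pi \<beta> \<mu> Q1 \<pi> s + (1 - t) * V_pi \<beta> \<mu> Q2 \<pi> s"
  unfolding V_pi_def
  by (simp add: algebra_simps sum.distrib sum_distrib_left sum_subtractf)

lemma V_pi_conc:
  fixes \<pi>1 \<pi>2 :: "'s \<Rightarrow> 'a::finite \<Rightarrow> real"
  assumes "0 \<le> t" "t \<le> 1" "\<And>a. 0 \<le> \<pi>1 s a" "\<And>a. 0 \<le> \<pi>2 s a" "\<And>a. 0 < \<mu> s a" "0 \<le> \<beta>"
  shows "t * V_pi \<beta> \<mu> Q \<pi>1 s + (1 - t) * V_pi \<beta> \<mu> Q \<pi>2 s
     \<le> V_pi \<beta> \<mu> Q (\<lambda>s a. t * \<pi>1 s a + (1 - t) * \<pi>2 s a) s"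
proof -
  have "t * (\<pi>1 s a * (Q s a - \<beta> * ln (\<pi>1 s a / \<mu> s a)))
      + (1 - t) * (\<pi>2 s a * (Q s a - \<beta> * ln (\<pi>2 s a / \<mu> s a)))
      \<le> (t * \<pi>1 s a + (1 - t) * \<pi>2 s a) * (Q s a - \<beta> * ln ((t * \<pi>1 s a + (1 - t) * \<pi>2 s a) / \<mu> s a))" for a
  proof -
    have h: "\<beta> * ((t * \<pi>1 s a + (1 - t) * \<pi>2 s a) * ln ((t * \<pi>1 s a + (1 - t) * \<pi>2 s a) / \<mu> s a))
       \<le> \<beta> * (t * (\<pi>1 s a * ln (\<pi>1 s a / \<mu> s a)) + (1 - t) * (\<pi>2 s a * ln (\<pi>2 s a / \<mu> s a)))"
      using ent_conc[OF assms(1,2) assms(3)[of a] assms(4)[of a] assms(5)[of a]] assms(6)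
      by (rule mult_left_mono)
    then show ?thesis by (simp add: algebra_simps)
  qed
  then have "(\<Sum>a\<in>UNIV. t * (\<pi>1 s a * (Q s a - \<beta> * ln (\<pi>1 s a / \<mu> s a)))
      + (1 - t) * (\<pi>2 s a * (Q s a - \<beta> * ln (\<pi>2 s a / \<mu> s a))))
      \<le> (\<Sum>a\<in>UNIV. (t * \<pi>1 s a + (1 - t) * \<pi>2 s a) * (Q s a - \<beta> * ln ((t * \<pi>1 s a + (1 - t) * \<pi>2 s a) / \<mu> s a)))"
    by (rule sum_mono)
  then show ?thesis unfolding V_pi_def by (simp add: sum.distrib sum_distrib_left)
qed

definition gibbs :: "real \<Rightarrow> ('s \<Rightarrow> 'a::finite \<Rightarrow> real) \<Rightarrow> ('s \<Rightarrow> 'a \<Rightarrow> real) \<Rightarrow> 's \<Rightarrow> 'a \<Rightarrow> real" where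
  "gibbs \<beta> \<mu> Q s a = \<mu> s a * exp (Q s a / \<beta>) / (\<Sum>b\<in>UNIV. \<mu> s b * exp (Q s b / \<beta>))"

lemma Z_pos:
  fixes \<mu> :: "'s \<Rightarrow> 'a::finite \<Rightarrow> real"
  assumes "\<And>a. 0 < \<mu> s a"
  shows "0 < (\<Sum>b\<in>UNIV. \<mu> s b * exp (Q s b / \<beta>))"
  using assms by (intro sum_pos) auto

lemma gibbs_policy:
  fixes \<mu> :: "'s::finite \<Rightarrow> 'a::finite \<Rightarrow> real"
  assumes "\<And>s a. 0 < \<mu> s a"
  shows "is_policy (gibbs \<beta> \<mu> Q)"
proof -
  have "\<And>s a. 0 \<le> gibbs \<beta> \<mu> Q s a" unfolding gibbs_def
    using assms Z_pos[of \<mu>] by (simp add: less_imp_le)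
  moreover have "(\<Sum>a\<in>UNIV. gibbs \<beta> \<mu> Q s a) = 1" for s
    unfolding gibbs_def using Z_pos[of \<mu> s Q \<beta>] assms
    by (simp add: sum_divide_distrib[symmetric])
  ultimately show ?thesis unfolding is_policy_def by blast
qed

lemma gibbs_eq:
  fixes \<mu> :: "'s \<Rightarrow> 'a::finite \<Rightarrow> real"
  assumes "\<And>a. 0 < \<mu> s a" "0 < \<beta>"
  shows "V_pi \<beta> \<mu> Q (gibbs \<beta> \<mu> Q) s = V_soft \<beta> \<mu> Q s"
proof -
  define Z where "Z = (\<Sum>b\<in>UNIV. \<mu> s b * exp (Q s b / \<beta>))"
  have Zp: "0 < Z" unfolding Z_def using Z_pos[of \<mu> s Q \<beta>] assms by simp
  have t: "gibbs \<beta> \<mu> Q s a * (Q s a - \<beta> * ln (gibbs \<beta> \<mu> Q s a / \<mu> s a))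
     = gibbs \<beta> \<mu> Q s a * (\<beta> * ln Z)" for a
  proof -
    have "gibbs \<beta> \<mu> Q s a / \<mu> s a = exp (Q s a / \<beta>) / Z"
      unfolding gibbs_def Z_def[symmetric] using assms(1)[of a] by simp
    then have e: "ln (gibbs \<beta> \<mu> Q s a / \<mu> s a) = Q s a / \<beta> - ln Z"
      using Zp by (simp add: ln_div)
    have "\<beta> * (Q s a / \<beta> - ln Z) = Q s a - \<beta> * ln Z" using assms(2) by (simp add: algebra_simps)
    then show ?thesis unfolding e by simp
  qed
  have "(\<Sum>a\<in>UNIV. gibbs \<beta> \<mu> Q s a) = 1"
    using gibbs_policy[of "\<lambda>_. \<mu> s" \<beta> "\<lambda>_. Q s"] assms unfolding is_policy_def gibbs_def by auto
  then show ?thesis unfolding V_pi_def V_soft_def Z_def[symmetric] t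
    by (simp add: sum_distrib_right[symmetric])
qed

lemma gibbs_le:
  fixes \<mu> :: "'s \<Rightarrow> 'a::finite \<Rightarrow> real"
  assumes "\<And>a. 0 < \<mu> s a" "0 < \<beta>" "\<And>a. 0 \<le> \<pi> s a" "(\<Sum>a\<in>UNIV. \<pi> s a) = 1"
  shows "V_pi \<beta> \<mu> Q \<pi> s \<le> V_soft \<beta> \<mu> Q s"
proof -
  define Z where "Z = (\<Sum>b\<in>UNIV. \<mu> s b * exp (Q s b / \<beta>))"
  define g where "g a = \<mu> s a * exp (Q s a / \<beta>) / Z" for a
  have Zp: "0 < Z" unfolding Z_def using Z_pos[of \<mu> s Q \<beta>] assms by simp
  have gs: "(\<Sum>a\<in>UNIV. g a) = 1" unfolding g_def using Zp
    by (simp add: sum_divide_distrib[symmetric] Z_def)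
  have t: "\<pi> s a * (Q s a - \<beta> * ln (\<pi> s a / \<mu> s a)) \<le> \<pi> s a * (\<beta> * ln Z) + \<beta> * (g a - \<pi> s a)" for a
  proof (cases "\<pi> s a = 0")
    case True
    then show ?thesis using assms(1)[of a] assms(2) Zp unfolding g_def by simp
  next
    case False
    hence pp: "0 < \<pi> s a" using assms(3)[of a] by simp
    have gp: "0 < g a" unfolding g_def using Zp assms(1)[of a] by simp
    have l1: "ln (g a / \<pi> s a) \<le> g a / \<pi> s a - 1" using gp pp by (intro ln_le_minus_one) simp
    have l2: "ln (g a / \<pi> s a) = ln (\<mu> s a) + Q s a / \<beta> - ln Z - ln (\<pi> s a)"
      unfolding g_def using Zp assms(1)[of a] pp by (simp add: ln_div ln_mult)
    have l3: "ln (\<pi> s a / \<mu> s a) = ln (\<pi> s a) - ln (\<mu> s a)" using pp assms(1)[of a] by (simp add: ln_div)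
    have "\<pi> s a * (Q s a - \<beta> * ln (\<pi> s a / \<mu> s a)) = \<pi> s a * \<beta> * (ln (g a / \<pi> s a) + ln Z)"
      unfolding l2 l3 using assms(2) by (simp add: algebra_simps)
    also have "\<dots> \<le> \<pi> s a * \<beta> * (g a / \<pi> s a - 1 + ln Z)"
      using l1 pp assms(2) by (intro mult_left_mono) auto
    also have "\<dots> = \<pi> s a * (\<beta> * ln Z) + \<beta> * (g a - \<pi> s a)"
      using pp by (simp add: algebra_simps)
    finally show ?thesis .
  qed
  have "V_pi \<beta> \<mu> Q \<pi> s \<le> (\<Sum>a\<in>UNIV. \<pi> s a * (\<beta> * ln Z) + \<beta> * (g a - \<pi> s a))"
    unfolding V_pi_def by (rule sum_mono) (rule t)
  also have "\<dots> = \<beta> * ln Z"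
    using gs assms(4) by (simp add: sum.distrib sum_distrib_right[symmetric] sum_distrib_left[symmetric] sum_subtractf)
  finally show ?thesis unfolding V_soft_def Z_def .
qed

lemma V_soft_conv:
  fixes \<mu> :: "'s::finite \<Rightarrow> 'a::finite \<Rightarrow> real"
  assumes "0 \<le> t" "t \<le> 1" "\<And>s a. 0 < \<mu> s a" "0 < \<beta>"
  shows "V_soft \<beta> \<mu> (\<lambda>s a. t * Q1 s a + (1 - t) * Q2 s a) s
     \<le> t * V_soft \<beta> \<mu> Q1 s + (1 - t) * V_soft \<beta> \<mu> Q2 s"
proof -
  define g where "g = gibbs \<beta> \<mu> (\<lambda>s a. t * Q1 s a + (1 - t) * Q2 s a)"
  have gp: "is_policy g" unfolding g_def using gibbs_policy assms(3) by blast
  have "V_soft \<beta> \<mu> (\<lambda>s a. t * Q1 s a + (1 - t) * Q2 s a) s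
     = V_pi \<beta> \<mu> (\<lambda>s a. t * Q1 s a + (1 - t) * Q2 s a) g s"
    unfolding g_def using gibbs_eq[of \<mu> _ \<beta>] assms(3,4) by simp
  also have "\<dots> = t * V_pi \<beta> \<mu> Q1 g s + (1 - t) * V_pi \<beta> \<mu> Q2 g s" by (rule V_pi_lin)
  also have "\<dots> \<le> t * V_soft \<beta> \<mu> Q1 s + (1 - t) * V_soft \<beta> \<mu> Q2 s"
  proof -
    have "V_pi \<beta> \<mu> Q1 g s \<le> V_soft \<beta> \<mu> Q1 s" "V_pi \<beta> \<mu> Q2 g s \<le> V_soft \<beta> \<mu> Q2 s"
      using gibbs_le[of \<mu> s \<beta> g] gp assms(3,4) unfolding is_policy_def by auto
    then show ?thesis using assms(1,2) by (intro add_mono mult_left_mono) auto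
  qed
  finally show ?thesis .
qed

theorem proposition4p4:
  fixes T :: "'s::finite \<Rightarrow> 'a::finite \<Rightarrow> 's \<Rightarrow> real"
    and p0 :: "'s \<Rightarrow> real"
    and \<gamma> \<beta> \<alpha> :: real
    and \<mu> :: "'s \<Rightarrow> 'a \<Rightarrow> real"
    and dU :: "'s \<Rightarrow> 'a \<Rightarrow> real"
    and \<Psi> :: "'s \<Rightarrow> 'a \<Rightarrow> real"
  defines "L \<equiv> L_minmax \<gamma> T p0 \<beta> \<alpha> \<mu> dU \<Psi>"
      and "L1 \<equiv> L_single \<gamma> T p0 \<beta> \<alpha> \<mu> dU \<Psi>"
  assumes T_nonneg: "\<And>s a s'. 0 \<le> T s a s'"
      and T_sum: "\<And>s a. (\<Sum>s'\<in>UNIV. T s a s') = 1"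
      and p0_nonneg: "\<And>s. 0 \<le> p0 s"
      and p0_sum: "(\<Sum>s\<in>UNIV. p0 s) = 1"
      and gamma: "0 \<le> \<gamma>" "\<gamma> < 1"
      and beta: "0 < \<beta>"
      and alpha: "0 \<le> \<alpha>" "\<alpha> < 1"
      and mu_pos: "\<And>s a. 0 < \<mu> s a"
      and mu_policy: "is_policy \<mu>"
      and dU_nonneg: "\<And>s a. 0 \<le> dU s a"
      and dU_sum: "(\<Sum>s\<in>UNIV. \<Sum>a\<in>UNIV. dU s a) = 1"
  shows
    \<comment> \<open>(i) affine ("linear") in Q\<close>
    "(\<forall>\<pi>\<in>policies. \<forall>Q1 Q2 t.
        L (\<lambda>s a. t * Q1 s a + (1 - t) * Q2 s a) \<pi> = t * L Q1 \<pi> + (1 - t) * L Q2 \<pi>)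
     \<comment> \<open>(i) concave in pi over the convex set of policies\<close>
     \<and> (\<forall>Q. \<forall>\<pi>1\<in>policies. \<forall>\<pi>2\<in>policies. \<forall>t. 0 \<le> t \<and> t \<le> 1 \<longrightarrow>
        t * L Q \<pi>1 + (1 - t) * L Q \<pi>2 \<le> L Q (\<lambda>s a. t * \<pi>1 s a + (1 - t) * \<pi>2 s a))
     \<comment> \<open>(i) minimax equality (extended reals: the min over Q may be -infinity)\<close>
     \<and> (SUP \<pi>\<in>policies. INF Q. ereal (L Q \<pi>)) = (INF Q. SUP \<pi>\<in>policies. ereal (L Q \<pi>))
     \<comment> \<open>(ii) for every Q, the max over pi exists and equals L1 Q + (1-alpha) E_dU[delta]\<close>
     \<and> (\<forall>Q. (\<forall>\<pi>\<in>policies. L Q \<pi> \<le> L1 Q + (1 - \<alpha>) * (\<Sum>s\<in>UNIV. \<Sum>a\<in>UNIV. dU s a * delta_w \<alpha> \<Psi> s a))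
           \<and> (\<exists>\<pi>\<in>policies. L Q \<pi> = L1 Q + (1 - \<alpha>) * (\<Sum>s\<in>UNIV. \<Sum>a\<in>UNIV. dU s a * delta_w \<alpha> \<Psi> s a)))
     \<comment> \<open>(ii) L1 convex in Q\<close>
     \<and> (\<forall>Q1 Q2 t. 0 \<le> t \<and> t \<le> 1 \<longrightarrow>
        L1 (\<lambda>s a. t * Q1 s a + (1 - t) * Q2 s a) \<le> t * L1 Q1 + (1 - t) * L1 Q2)"
proof -
  define w where "w = wt \<gamma> T p0 \<alpha> dU \<Psi>"
  define C where "C = (1 - \<alpha>) * (\<Sum>s\<in>UNIV. \<Sum>a\<in>UNIV. dU s a * delta_w \<alpha> \<Psi> s a)"
  define SQ where "SQ Q = (\<Sum>s\<in>UNIV. \<Sum>a\<in>UNIV. dU s a * delta_w \<alpha> \<Psi> s a * Q s a)" for Q :: "'s \<Rightarrow> 'a \<Rightarrow> real"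
  have decL: "L Q \<pi> = (\<Sum>s\<in>UNIV. w s * V_pi \<beta> \<mu> Q \<pi> s) - SQ Q + C" for Q \<pi>
    unfolding L_def L_minmax_def Bell_pi_def decomp_gen w_def SQ_def C_def ..
  have decL1: "L1 Q = (\<Sum>s\<in>UNIV. w s * V_soft \<beta> \<mu> Q s) - SQ Q" for Q
    unfolding L1_def L_single_def Bell_soft_def decomp_gen w_def SQ_def ..
  have dpos: "0 < delta_w \<alpha> \<Psi> s a" for s a unfolding delta_w_def by simp
  have w0: "0 \<le> w s" for s
    unfolding w_def wt_def using gamma p0_nonneg dU_nonneg T_nonneg dpos
    by (intro add_nonneg_nonneg mult_nonneg_nonneg sum_nonneg) (auto intro: less_imp_le)
  have SQlin: "SQ (\<lambda>s a. t * Q1 s a + (1 - t) * Q2 s a) = t * SQ Q1 + (1 - t) * SQ Q2" for t Q1 Q2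
  proof -
    have "SQ (\<lambda>s a. t * Q1 s a + (1 - t) * Q2 s a) = (\<Sum>s\<in>UNIV. \<Sum>a\<in>UNIV.
       t * (dU s a * delta_w \<alpha> \<Psi> s a * Q1 s a) + (1 - t) * (dU s a * delta_w \<alpha> \<Psi> s a * Q2 s a))"
      unfolding SQ_def by (intro sum.cong refl) (simp add: algebra_simps)
    also have "\<dots> = t * SQ Q1 + (1 - t) * SQ Q2"
      by (simp only: SQ_def sum.distrib sum_distrib_left)
    finally show ?thesis .
  qed
  have P1: "\<forall>\<pi>\<in>policies. \<forall>Q1 Q2 t.
        L (\<lambda>s a. t * Q1 s a + (1 - t) * Q2 s a) \<pi> = t * L Q1 \<pi> + (1 - t) * L Q2 \<pi>"
  proof (intro ballI allI)
    fix \<pi> :: "'s \<Rightarrow> 'a \<Rightarrow> real" and Q1 Q2 t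
    have "SQ (\<lambda>s a. t * Q1 s a + (1 - t) * Q2 s a) = t * SQ Q1 + (1 - t) * SQ Q2"
      by (rule SQlin)
    moreover have "(\<Sum>s\<in>UNIV. w s * V_pi \<beta> \<mu> (\<lambda>s a. t * Q1 s a + (1 - t) * Q2 s a) \<pi> s)
       = t * (\<Sum>s\<in>UNIV. w s * V_pi \<beta> \<mu> Q1 \<pi> s) + (1 - t) * (\<Sum>s\<in>UNIV. w s * V_pi \<beta> \<mu> Q2 \<pi> s)"
      unfolding V_pi_lin by (rule sum_mix)
    ultimately show "L (\<lambda>s a. t * Q1 s a + (1 - t) * Q2 s a) \<pi> = t * L Q1 \<pi> + (1 - t) * L Q2 \<pi>"
      unfolding decL by (simp add: algebra_simps)
  qed
  have P2: "\<forall>Q. \<forall>\<pi>1\<in>policies. \<forall>\<pi>2\<in>policies. \<forall>t. 0 \<le> t \<and> t \<le> 1 \<longrightarrow>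
        t * L Q \<pi>1 + (1 - t) * L Q \<pi>2 \<le> L Q (\<lambda>s a. t * \<pi>1 s a + (1 - t) * \<pi>2 s a)"
  proof (intro allI ballI impI)
    fix Q \<pi>1 \<pi>2 :: "'s \<Rightarrow> 'a \<Rightarrow> real" and t :: real
    assume p1: "\<pi>1 \<in> policies" and p2: "\<pi>2 \<in> policies" and t: "0 \<le> t \<and> t \<le> 1"
    have "(\<Sum>s\<in>UNIV. w s * (t * V_pi \<beta> \<mu> Q \<pi>1 s + (1 - t) * V_pi \<beta> \<mu> Q \<pi>2 s))
       \<le> (\<Sum>s\<in>UNIV. w s * V_pi \<beta> \<mu> Q (\<lambda>s a. t * \<pi>1 s a + (1 - t) * \<pi>2 s a) s)"
      using p1 p2 t w0 mu_pos beta
      by (intro sum_mono mult_left_mono V_pi_conc) (auto simp: policies_def is_policy_def)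
    moreover have "(\<Sum>s\<in>UNIV. w s * (t * V_pi \<beta> \<mu> Q \<pi>1 s + (1 - t) * V_pi \<beta> \<mu> Q \<pi>2 s))
       = t * (\<Sum>s\<in>UNIV. w s * V_pi \<beta> \<mu> Q \<pi>1 s) + (1 - t) * (\<Sum>s\<in>UNIV. w s * V_pi \<beta> \<mu> Q \<pi>2 s)"
      by (rule sum_mix)
    ultimately show "t * L Q \<pi>1 + (1 - t) * L Q \<pi>2 \<le> L Q (\<lambda>s a. t * \<pi>1 s a + (1 - t) * \<pi>2 s a)"
      unfolding decL by (simp add: algebra_simps)
  qed
  have P4a: "L Q \<pi> \<le> L1 Q + C" if "\<pi> \<in> policies" for Q \<pi>
  proof -
    have "(\<Sum>s\<in>UNIV. w s * V_pi \<beta> \<mu> Q \<pi> s) \<le> (\<Sum>s\<in>UNIV. w s * V_soft \<beta> \<mu> Q s)"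
      using that w0 mu_pos beta
      by (intro sum_mono mult_left_mono gibbs_le) (auto simp: policies_def is_policy_def)
    then show ?thesis unfolding decL decL1 by simp
  qed
  have P4b: "L Q (gibbs \<beta> \<mu> Q) = L1 Q + C" "gibbs \<beta> \<mu> Q \<in> policies" for Q
  proof -
    show "L Q (gibbs \<beta> \<mu> Q) = L1 Q + C"
      unfolding decL decL1 using gibbs_eq[of \<mu> _ \<beta> Q] mu_pos beta by simp
    show "gibbs \<beta> \<mu> Q \<in> policies" unfolding policies_def using gibbs_policy mu_pos by blast
  qed
  have P4: "\<forall>Q. (\<forall>\<pi>\<in>policies. L Q \<pi> \<le> L1 Q + (1 - \<alpha>) * (\<Sum>s\<in>UNIV. \<Sum>a\<in>UNIV. dU s a * delta_w \<alpha> \<Psi> s a))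
           \<and> (\<exists>\<pi>\<in>policies. L Q \<pi> = L1 Q + (1 - \<alpha>) * (\<Sum>s\<in>UNIV. \<Sum>a\<in>UNIV. dU s a * delta_w \<alpha> \<Psi> s a))"
    using P4a P4b unfolding C_def by blast
  have P5: "\<forall>Q1 Q2 t. 0 \<le> t \<and> t \<le> 1 \<longrightarrow>
        L1 (\<lambda>s a. t * Q1 s a + (1 - t) * Q2 s a) \<le> t * L1 Q1 + (1 - t) * L1 Q2"
  proof (intro allI impI)
    fix Q1 Q2 and t :: real
    assume t: "0 \<le> t \<and> t \<le> 1"
    have "SQ (\<lambda>s a. t * Q1 s a + (1 - t) * Q2 s a) = t * SQ Q1 + (1 - t) * SQ Q2"
      by (rule SQlin)
    moreover have "(\<Sum>s\<in>UNIV. w s * V_soft \<beta> \<mu> (\<lambda>s a. t * Q1 s a + (1 - t) * Q2 s a) s)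
       \<le> (\<Sum>s\<in>UNIV. w s * (t * V_soft \<beta> \<mu> Q1 s + (1 - t) * V_soft \<beta> \<mu> Q2 s))"
      using t w0 mu_pos beta by (intro sum_mono mult_left_mono V_soft_conv) auto
    moreover have "(\<Sum>s\<in>UNIV. w s * (t * V_soft \<beta> \<mu> Q1 s + (1 - t) * V_soft \<beta> \<mu> Q2 s))
       = t * (\<Sum>s\<in>UNIV. w s * V_soft \<beta> \<mu> Q1 s) + (1 - t) * (\<Sum>s\<in>UNIV. w s * V_soft \<beta> \<mu> Q2 s)"
      by (rule sum_mix)
    ultimately show "L1 (\<lambda>s a. t * Q1 s a + (1 - t) * Q2 s a) \<le> t * L1 Q1 + (1 - t) * L1 Q2"
      unfolding decL1 by (simp add: algebra_simps)
  qed
  have SUPeq: "(SUP \<pi>\<in>policies. ereal (L Q \<pi>)) = ereal (L1 Q + C)" for Q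
  proof (rule antisym)
    show "(SUP \<pi>\<in>policies. ereal (L Q \<pi>)) \<le> ereal (L1 Q + C)"
      by (rule SUP_least) (use P4a in simp)
    show "ereal (L1 Q + C) \<le> (SUP \<pi>\<in>policies. ereal (L Q \<pi>))"
      by (rule SUP_upper2[OF P4b(2)[of Q]]) (use P4b(1) in simp)
  qed
  have weak: "(SUP \<pi>\<in>policies. INF Q. ereal (L Q \<pi>)) \<le> (INF Q. SUP \<pi>\<in>policies. ereal (L Q \<pi>))"
  proof (intro SUP_least INF_greatest)
    fix \<pi> Q :: "'s \<Rightarrow> 'a \<Rightarrow> real" assume "\<pi> \<in> policies"
    show "(INF Q. ereal (L Q \<pi>)) \<le> (SUP \<pi>\<in>policies. ereal (L Q \<pi>))"
    proof (rule order_trans)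
      show "(INF Q. ereal (L Q \<pi>)) \<le> ereal (L Q \<pi>)" by (rule INF_lower) simp
      show "ereal (L Q \<pi>) \<le> (SUP \<pi>\<in>policies. ereal (L Q \<pi>))" using \<open>\<pi> \<in> policies\<close> by (rule SUP_upper)
    qed
  qed
  define m where "m s = (\<Sum>a\<in>UNIV. dU s a * delta_w \<alpha> \<Psi> s a)" for s
  have P3: "(SUP \<pi>\<in>policies. INF Q. ereal (L Q \<pi>)) = (INF Q. SUP \<pi>\<in>policies. ereal (L Q \<pi>))"
  proof (cases "\<exists>s0. m s0 \<noteq> w s0")
    case True
    then obtain s0 where s0: "m s0 \<noteq> w s0" by blast
    define f where "f s = w s - m s" for s
    define D where "D = (\<Sum>s\<in>UNIV. f s * f s)"
    have "f s0 * f s0 \<le> D" unfolding D_def by (rule member_le_sum) auto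
    moreover have "0 < f s0 * f s0" using s0 unfolding f_def by (metis not_real_square_gt_zero right_minus_eq)
    ultimately have Dp: "0 < D" by linarith
    have Vc: "V_soft \<beta> \<mu> (\<lambda>s a. c * f s) s = c * f s" for c s
    proof -
      have "(\<Sum>a\<in>UNIV. \<mu> s a * exp (c * f s / \<beta>)) = exp (c * f s / \<beta>)"
        using mu_policy unfolding is_policy_def by (simp add: sum_distrib_right[symmetric])
      then show ?thesis unfolding V_soft_def using beta by simp
    qed
    have SQc: "SQ (\<lambda>s a. c * f s) = (\<Sum>s\<in>UNIV. c * f s * m s)" for c
      unfolding SQ_def m_def sum_distrib_left
      by (intro sum.cong refl) (simp add: algebra_simps)
    have L1c: "L1 (\<lambda>s a. c * f s) = c * D" for c
    proof -
      have "L1 (\<lambda>s a. c * f s) = (\<Sum>s\<in>UNIV. w s * (c * f s) - c * f s * m s)"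
        unfolding decL1 Vc SQc by (simp add: sum_subtractf)
      also have "\<dots> = (\<Sum>s\<in>UNIV. c * (f s * f s))"
        unfolding f_def by (intro sum.cong refl) (simp add: algebra_simps)
      also have "\<dots> = c * D" unfolding D_def by (simp add: sum_distrib_left)
      finally show ?thesis .
    qed
    have inf: "(INF Q. ereal (L1 Q + C)) = -\<infinity>"
    proof (rule ereal_bot)
      fix B
      define c where "c = (B - C) / D - 1"
      have "c * D + C = B - D" unfolding c_def using Dp by (simp add: field_simps)
      then have "L1 (\<lambda>s a. c * f s) + C \<le> B" using L1c Dp by simp
      then have "ereal (L1 (\<lambda>s a. c * f s) + C) \<le> ereal B" by simp
      then show "(INF Q. ereal (L1 Q + C)) \<le> ereal B"
        using INF_lower2[of "\<lambda>s a. c * f s" UNIV "\<lambda>Q. ereal (L1 Q + C)"] by simp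
    qed
    then have "(INF Q. SUP \<pi>\<in>policies. ereal (L Q \<pi>)) = -\<infinity>" unfolding SUPeq .
    then show ?thesis using weak by simp
  next
    case False
    then have mw: "m s = w s" for s by blast
    define ps where "ps s a = (if w s = 0 then \<mu> s a else dU s a * delta_w \<alpha> \<Psi> s a / w s)" for s a
    have ps0: "0 \<le> ps s a" for s a
      unfolding ps_def using mu_pos[of s a] dU_nonneg[of s a] dpos[of s a] w0[of s]
      by (auto intro: less_imp_le)
    have ps_pol: "ps \<in> policies"
    proof -
      have "(\<Sum>a\<in>UNIV. ps s a) = 1" for s
      proof (cases "w s = 0")
        case True then show ?thesis unfolding ps_def using mu_policy unfolding is_policy_def by simp
      next
        case False
        then have "(\<Sum>a\<in>UNIV. ps s a) = m s / w s" unfolding ps_def m_def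
          by (simp add: sum_divide_distrib)
        then show ?thesis using mw[of s] False by simp
      qed
      then show ?thesis unfolding policies_def is_policy_def using ps0 by blast
    qed
    have key: "w s * ps s a = dU s a * delta_w \<alpha> \<Psi> s a" for s a
    proof (cases "w s = 0")
      case True
      then have "m s = 0" using mw by simp
      then have "\<forall>a\<in>UNIV. dU s a * delta_w \<alpha> \<Psi> s a = 0" unfolding m_def
      proof (subst (asm) sum_nonneg_eq_0_iff)
        show "0 \<le> dU s a * delta_w \<alpha> \<Psi> s a" for a
          using dU_nonneg[of s a] dpos[of s a] by simp
      qed auto
      then show ?thesis using True by simp
    next
      case False then show ?thesis unfolding ps_def by simp
    qed
    have SQps: "SQ Q = (\<Sum>s\<in>UNIV. w s * (\<Sum>a\<in>UNIV. ps s a * Q s a))" for Q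
      unfolding SQ_def sum_distrib_left
      by (intro sum.cong refl) (simp add: mult.assoc[symmetric] key)
    define E where "E s = (\<Sum>a\<in>UNIV. ps s a * ln (ps s a / \<mu> s a))" for s
    define K where "K = C - \<beta> * (\<Sum>s\<in>UNIV. w s * E s)"
    have Vps: "V_pi \<beta> \<mu> Q ps s = (\<Sum>a\<in>UNIV. ps s a * Q s a) - \<beta> * E s" for Q s
      unfolding V_pi_def E_def sum_distrib_left sum_subtractf[symmetric]
      by (intro sum.cong refl) (simp add: algebra_simps)
    have LK: "L Q ps = K" for Q
    proof -
      have "(\<Sum>s\<in>UNIV. w s * V_pi \<beta> \<mu> Q ps s)
          = (\<Sum>s\<in>UNIV. w s * (\<Sum>a\<in>UNIV. ps s a * Q s a)) - \<beta> * (\<Sum>s\<in>UNIV. w s * E s)"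
      proof -
        have "(\<Sum>s\<in>UNIV. w s * V_pi \<beta> \<mu> Q ps s)
          = (\<Sum>s\<in>UNIV. w s * (\<Sum>a\<in>UNIV. ps s a * Q s a)) - (\<Sum>s\<in>UNIV. w s * (\<beta> * E s))"
          unfolding Vps right_diff_distrib sum_subtractf ..
        moreover have "(\<Sum>s\<in>UNIV. w s * (\<beta> * E s)) = \<beta> * (\<Sum>s\<in>UNIV. w s * E s)"
          by (simp add: sum_distrib_left mult.left_commute)
        ultimately show ?thesis by simp
      qed
      then show ?thesis unfolding decL K_def SQps by simp
    qed
    have lower: "ereal K \<le> (SUP \<pi>\<in>policies. INF Q. ereal (L Q \<pi>))"
      by (rule SUP_upper2[OF ps_pol]) (simp add: LK)
    have upper: "(INF Q. ereal (L1 Q + C)) \<le> ereal K"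
    proof (rule ereal_le_epsilon2)
      fix e :: real assume ep: "0 < e"
      define n where "n = real (card (UNIV :: 'a set))"
      define W where "W = (\<Sum>s\<in>UNIV. w s)"
      have W0: "0 \<le> W" unfolding W_def using w0 by (simp add: sum_nonneg)
      have n0: "0 \<le> n" unfolding n_def by simp
      have M0: "0 \<le> W * \<beta> * n" using W0 n0 beta by simp
      define eps where "eps = e / (W * \<beta> * n + 1)"
      have epsp: "0 < eps" unfolding eps_def using ep M0 by simp
      have epsb: "W * \<beta> * n * eps \<le> e"
      proof -
        have "W * \<beta> * n * eps = e * (W * \<beta> * n / (W * \<beta> * n + 1))"
          unfolding eps_def by (simp add: field_simps)
        also have "\<dots> \<le> e * 1" using ep M0 by (intro mult_left_mono) auto
        finally show ?thesis by simp
      qed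
      define Qe where "Qe s a = \<beta> * ln ((ps s a + eps) / \<mu> s a)" for s a
      have Vse: "V_soft \<beta> \<mu> Qe s = \<beta> * ln (1 + eps * n)" for s
      proof -
        have "\<mu> s a * exp (Qe s a / \<beta>) = ps s a + eps" for a
          unfolding Qe_def using beta mu_pos[of s a] ps0[of s a] epsp by simp
        then have "(\<Sum>a\<in>UNIV. \<mu> s a * exp (Qe s a / \<beta>)) = (\<Sum>a\<in>UNIV. ps s a) + eps * n"
          by (simp add: sum.distrib n_def)
        then show ?thesis unfolding V_soft_def using ps_pol unfolding policies_def is_policy_def by simp
      qed
      have Emono: "\<beta> * E s \<le> (\<Sum>a\<in>UNIV. ps s a * Qe s a)" for s
        unfolding E_def sum_distrib_left
      proof (rule sum_mono)
        fix a
        show "\<beta> * (ps s a * ln (ps s a / \<mu> s a)) \<le> ps s a * Qe s a"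
        proof (cases "ps s a = 0")
          case True then show ?thesis by simp
        next
          case False
          then have pp: "0 < ps s a" using ps0[of s a] by simp
          have "ln (ps s a / \<mu> s a) \<le> ln ((ps s a + eps) / \<mu> s a)"
            using pp epsp mu_pos[of s a] by (simp add: divide_right_mono)
          then have "\<beta> * ln (ps s a / \<mu> s a) \<le> \<beta> * ln ((ps s a + eps) / \<mu> s a)"
            using beta by simp
          then have "ps s a * (\<beta> * ln (ps s a / \<mu> s a)) \<le> ps s a * (\<beta> * ln ((ps s a + eps) / \<mu> s a))"
            by (rule mult_left_mono) (use pp in auto)
          then show ?thesis unfolding Qe_def by (simp add: algebra_simps)
        qed
      qed
      have lnb: "\<beta> * ln (1 + eps * n) \<le> \<beta> * (eps * n)"
        using beta epsp n0 by (intro mult_left_mono ln_add_one_self_le_self) auto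
      have "L1 Qe = (\<Sum>s\<in>UNIV. w s * (\<beta> * ln (1 + eps * n) - (\<Sum>a\<in>UNIV. ps s a * Qe s a)))"
        unfolding decL1 Vse SQps by (simp add: sum_subtractf right_diff_distrib)
      also have "\<dots> \<le> (\<Sum>s\<in>UNIV. w s * (\<beta> * (eps * n) - \<beta> * E s))"
        using w0 lnb Emono by (intro sum_mono mult_left_mono) (auto intro: diff_mono)
      also have "\<dots> = W * \<beta> * n * eps - \<beta> * (\<Sum>s\<in>UNIV. w s * E s)"
        unfolding W_def by (simp add: right_diff_distrib sum_subtractf sum_distrib_left sum_distrib_right algebra_simps)
      finally have "L1 Qe + C \<le> K + e" unfolding K_def using epsb by linarith
      then have "ereal (L1 Qe + C) \<le> ereal K + ereal e" by simp
      then show "(INF Q. ereal (L1 Q + C)) \<le> ereal K + ereal e"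
        using INF_lower2[of Qe UNIV "\<lambda>Q. ereal (L1 Q + C)"] by simp
    qed
    show ?thesis using weak lower upper unfolding SUPeq by (rule_tac antisym) auto
  qed
  show ?thesis using P1 P2 P3 P4 P5 by blast
qed

end
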